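(* For all integers $n\ge0$ and $0\le k\le n$, $$\sum_{i=0}^{\lfloor\frac{n+1}{2}\rfloor}\frac{(-1)^i}{n+1-i}\binom{n+1-i}{i}\binom{2n-2k-2i}{n-k-i} = \frac{(-1)^{n-k}}{n+1}\binom{k}{n-k}.$$ In particular the left-hand side vanishes when $2k<n$.
   Context: Binomial coefficients use the convention $\binom{a}{b}=0$ if $b<0$ or $b>a$ (in particular $\binom{2m}{m}=0$ for $m<0$). *)

theory Defs
  imports Complex_Main
begin

definition binomZ :: "int \<Rightarrow> int \<Rightarrow> int" where
  "binomZ a b = (if 0 \<le> b \<and> b \<le> a then int (nat a choose nat b) else 0)"

end

theory Submission imports Defs begin

lemma binomZ_pascal:
  assumes "a \<noteq> -1 \<or> b \<noteq> 0"
  shows "binomZ (a+1) b = binomZ a b + binomZ a (b-1)"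
proof (cases "a \<ge> 0 \<and> b \<ge> 1")
  case True
  then obtain p q where p: "a = int p" and q: "b = int (Suc q)"
    by (metis add.commute int_ops(4) nonneg_int_cases zle_iff_zadd zless_imp_add1_zle not_less)
  show ?thesis using True unfolding binomZ_def p q
    by (simp add: nat_add_distrib)
next
  case False
  then show ?thesis using assms unfolding binomZ_def by auto
qed

lemma binomZ_absorb:
  assumes "a \<ge> 1"
  shows "a * binomZ (a-1) (b-1) = b * binomZ a b"
proof (cases "b \<ge> 1")
  case True
  obtain p where p: "a = int (Suc p)" using assms
    by (intro that[of "nat (a-1)"]) auto
  obtain q where q: "b = int (Suc q)" using True
    by (intro that[of "nat (b-1)"]) auto
  have "int (Suc p) * int (p choose q) = int (Suc q) * int (Suc p choose Suc q)"
    using Suc_times_binomial_eq[of p q] by (metis mult.commute of_nat_mult)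
  moreover have "binomZ (a-1) (b-1) = int (p choose q)" unfolding binomZ_def p q by auto
  moreover have "binomZ a b = int (Suc p choose Suc q)"
    unfolding binomZ_def p q nat_int
    using binomial_eq_0[of "Suc p" "Suc q"] by (auto simp del: binomial_Suc_Suc)
  ultimately show ?thesis using p q by simp
next
  case False
  then show ?thesis unfolding binomZ_def by auto
qed

lemma central: assumes "m \<ge> 1" shows "binomZ (2*m) m = 2 * binomZ (2*m-1) (m-1)"
proof -
  obtain q where q: "m = int (Suc q)" using assms
    by (intro that[of "nat (m-1)"]) auto
  have e1: "nat (2*m) = Suc (2*q+1)" "nat (2*m-1) = 2*q+1" "nat m = Suc q" "nat (m-1) = q" using q by auto
  have "(2*q+1 choose Suc q) = (2*q+1 choose q)"
    using binomial_symmetric[of q "2*q+1"] by simp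
  then show ?thesis unfolding binomZ_def e1 using q by auto
qed

definition cZ :: "int \<Rightarrow> int" where "cZ j = binomZ (2*j) j"
definition BL :: "int \<Rightarrow> int \<Rightarrow> int" where
  "BL N i = binomZ (N-i) i + binomZ (N-i-1) (i-1)"
definition FF :: "int \<Rightarrow> nat \<Rightarrow> int" where
  "FF N m = (\<Sum>i\<le>m. (-1)^i * BL N (int i) * cZ (int m - int i))"
definition RR :: "int \<Rightarrow> nat \<Rightarrow> int" where
  "RR N m = (-1)^m * binomZ (N-1-int m) (int m) + 2*binomZ (2*int m-N) (int m-N)"

lemma BL_rec: assumes "N \<ge> 1" shows "BL (N+2) i = BL (N+1) i + BL N (i-1)"
proof -
  have 1: "binomZ (N+2-i) i = binomZ (N+1-i) i + binomZ (N+1-i) (i-1)"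
    using binomZ_pascal[of "N+1-i" i] assms by (auto simp: algebra_simps)
  have 2: "binomZ (N+1-i) (i-1) = binomZ (N-i) (i-1) + binomZ (N-i) (i-1-1)"
    using binomZ_pascal[of "N-i" "i-1"] assms by (auto simp: algebra_simps)
  show ?thesis unfolding BL_def using 1 2 by (simp add: algebra_simps)
qed

lemma BL_neg: "i < 0 \<Longrightarrow> BL N i = 0"
  unfolding BL_def binomZ_def by auto

lemma cZ_neg: "j < 0 \<Longrightarrow> cZ j = 0"
  unfolding cZ_def binomZ_def by auto

lemma FF_rec: assumes "N \<ge> 1" shows "FF (N+2) (Suc m) = FF (N+1) (Suc m) - FF N m"
proof -
  have "FF (N+2) (Suc m) = FF (N+1) (Suc m)
     + (\<Sum>i\<le>Suc m. (-1)^i * BL N (int i - 1) * cZ (int (Suc m) - int i))"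
    unfolding FF_def BL_rec[OF assms] by (simp add: algebra_simps sum.distrib)
  also have "(\<Sum>i\<le>Suc m. (-1)^i * BL N (int i - 1) * cZ (int (Suc m) - int i)) = - FF N m"
    unfolding sum.atMost_Suc_shift FF_def by (simp add: BL_neg sum_negf)
  finally show ?thesis by simp
qed

lemma RR_rec: assumes "N \<ge> 1" shows "RR (N+2) (Suc m) = RR (N+1) (Suc m) - RR N m"
proof -
  have 1: "binomZ (N+2-1-int (Suc m)) (int (Suc m)) = binomZ (N-1-int m) (int (Suc m)) + binomZ (N-1-int m) (int m)"
    using binomZ_pascal[of "N-1-int m" "int (Suc m)"] assms by (auto simp: algebra_simps)
  have 2: "binomZ (2*int (Suc m) - (N+1)) (int (Suc m) - (N+1)) = binomZ (2*int m - N) (int m - N) + binomZ (2*int (Suc m) - (N+2)) (int (Suc m) - (N+2))"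
    using binomZ_pascal[of "2*int m - N" "int m - N"] assms by (auto simp: algebra_simps)
  show ?thesis unfolding RR_def using 1 2 by (simp add: algebra_simps)
qed

lemma FF_1: "FF 1 m = cZ (int m)"
proof -
  have "BL 1 (int i) = (if i = 0 then 1 else 0)" for i
    unfolding BL_def binomZ_def by auto
  then have "FF 1 m = (\<Sum>i\<le>m. if i = 0 then cZ (int m) else 0)"
    unfolding FF_def by (intro sum.cong) auto
  then show ?thesis by simp
qed

lemma RR_1: "RR 1 m = cZ (int m)"
proof (cases m)
  case 0 then show ?thesis unfolding RR_def cZ_def binomZ_def by simp
next
  case (Suc q)
  have "cZ (int m) = 2 * binomZ (2*int m-1) (int m-1)" unfolding cZ_def using Suc by (intro central) simp
  moreover have "binomZ (- int m) (int m) = 0" unfolding binomZ_def using Suc by simp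
  ultimately show ?thesis unfolding RR_def by simp
qed

lemma FF_2: "FF 2 m = RR 2 m"
proof -
  have "BL 2 (int i) = (if i = 0 then 1 else if i = 1 then 2 else 0)" for i
    unfolding BL_def binomZ_def by auto
  then have e: "FF 2 m = (\<Sum>i\<le>m. (-1)^i * (if i = 0 then 1 else if i = 1 then 2 else 0) * cZ (int m - int i))"
    unfolding FF_def by simp
  show ?thesis
  proof (cases m)
    case 0 then show ?thesis unfolding e RR_def cZ_def binomZ_def by simp
  next
    case (Suc q)
    have "FF 2 m = (\<Sum>i\<le>m. (if i = 0 then cZ (int m) else 0) + (if i = 1 then - 2 * cZ (int q) else 0))"
      unfolding e by (intro sum.cong) (auto simp: Suc)
    then have "FF 2 m = cZ (int q + 1) - 2 * cZ (int q)"
      using Suc by (simp add: sum.distrib add.commute)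
    moreover have "cZ (int q + 1) = 2 * binomZ (2*int q+1) (int q)"
      unfolding cZ_def using central[of "int q + 1"] by (simp add: algebra_simps)
    moreover have "binomZ (2*int q+1) (int q) = binomZ (2*int q) (int q) + binomZ (2*int q) (int q - 1)"
      using binomZ_pascal[of "2*int q" "int q"] by simp
    moreover have "binomZ (1 - int (Suc q)) (int (Suc q)) = 0" unfolding binomZ_def by simp
    ultimately show ?thesis unfolding RR_def Suc cZ_def by (simp add: algebra_simps)
  qed
qed

lemma FF_RR_pair: "(\<forall>m. FF (int n + 1) m = RR (int n + 1) m) \<and> (\<forall>m. FF (int n + 2) m = RR (int n + 2) m)"
proof (induction n)
  case 0
  then show ?case using FF_1 RR_1 FF_2 by simp
next
  case (Suc n)
  have "FF (int n + 3) m = RR (int n + 3) m" for m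
  proof (cases m)
    case 0
    have "FF N 0 = 1" "RR N 0 = 1" if "N \<ge> 1" for N
      using that unfolding FF_def RR_def BL_def cZ_def binomZ_def by auto
    then show ?thesis using 0 by simp
  next
    case (Suc q)
    have "FF (int n + 1 + 2) (Suc q) = FF (int n + 1 + 1) (Suc q) - FF (int n + 1) q"
      by (rule FF_rec) simp
    moreover have "RR (int n + 1 + 2) (Suc q) = RR (int n + 1 + 1) (Suc q) - RR (int n + 1) q"
      by (rule RR_rec) simp
    ultimately show ?thesis using Suc.IH Suc by (simp add: algebra_simps)
  qed
  then show ?case using Suc.IH by (simp add: algebra_simps)
qed

lemma FF_RR: "N \<ge> 1 \<Longrightarrow> FF N m = RR N m"
  using FF_RR_pair[of "nat (N-1)"] by simp

theorem mainTheorem13: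
  fixes n k :: int
  assumes "0 \<le> n" and "0 \<le> k" and "k \<le> n"
  shows "(\<Sum>i\<in>{0..(n+1) div 2}.
            (-1::real) ^ nat i / real_of_int (n + 1 - i)
            * real_of_int (binomZ (n + 1 - i) i)
            * real_of_int (binomZ (2*n - 2*k - 2*i) (n - k - i)))
         = (-1::real) ^ nat (n - k) / real_of_int (n + 1) * real_of_int (binomZ k (n - k))"
proof -
  define m where "m = nat (n - k)"
  define nn where "nn = nat n"
  define D where "D = nat ((n+1) div 2)"
  have mn: "m \<le> nn" and Dn: "D \<le> nn" using assms unfolding m_def nn_def D_def by auto
  define g where "g i = (-1::real) ^ i / real_of_int (n + 1 - int i)
            * real_of_int (binomZ (n + 1 - int i) (int i))
            * real_of_int (binomZ (2*n - 2*k - 2*int i) (n - k - int i))" for i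
  define h where "h i = real_of_int ((-1)^i * BL (n+1) (int i) * cZ (int m - int i))" for i
  have d0: "(n+1) div 2 \<ge> 0" using assms by simp
  have "{0..(n+1) div 2} = int ` {..D}" unfolding D_def
    using d0 by (auto simp: image_iff le_nat_iff intro!: bexI[where x="nat _"])
  then have "(\<Sum>i\<in>{0..(n+1) div 2}.
            (-1::real) ^ nat i / real_of_int (n + 1 - i)
            * real_of_int (binomZ (n + 1 - i) i)
            * real_of_int (binomZ (2*n - 2*k - 2*i) (n - k - i))) = (\<Sum>i\<le>D. g i)"
    by (simp add: sum.reindex g_def)
  also have "\<dots> = (\<Sum>i\<le>nn. g i)"
  proof (rule sum.mono_neutral_left)
    show "\<forall>i\<in>{..nn} - {..D}. g i = 0"
    proof
      fix i assume "i \<in> {..nn} - {..D}"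
      then have "int i > (n+1) div 2" unfolding D_def by auto
      then have "binomZ (n + 1 - int i) (int i) = 0" unfolding binomZ_def by auto
      then show "g i = 0" unfolding g_def by simp
    qed
  qed (use Dn in auto)
  also have "\<dots> = (\<Sum>i\<le>nn. h i) / real_of_int (n+1)"
    unfolding sum_divide_distrib
  proof (rule sum.cong[OF refl])
    fix i assume "i \<in> {..nn}"
    then have a1: "n + 1 - int i \<ge> 1" unfolding nn_def using assms by (auto simp: le_nat_iff)
    have ab: "(n + 1 - int i) * binomZ (n + 1 - int i - 1) (int i - 1) = int i * binomZ (n + 1 - int i) (int i)"
      by (rule binomZ_absorb[OF a1])
    have "(n + 1 - int i) * BL (n+1) (int i) = (n+1) * binomZ (n + 1 - int i) (int i)"
      unfolding BL_def using ab by (simp add: algebra_simps)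
    then have "real_of_int (n + 1 - int i) * real_of_int (BL (n+1) (int i)) = real_of_int (n+1) * real_of_int (binomZ (n + 1 - int i) (int i))"
      by (metis of_int_mult)
    moreover have "real_of_int (n + 1 - int i) \<noteq> 0" using a1 by simp
    ultimately have bl: "real_of_int (BL (n+1) (int i)) = real_of_int (n+1) / real_of_int (n + 1 - int i) * real_of_int (binomZ (n + 1 - int i) (int i))"
      by (simp add: field_simps)
    have cz: "cZ (int m - int i) = binomZ (2*n - 2*k - 2*int i) (n - k - int i)"
      unfolding cZ_def m_def using assms by (simp add: algebra_simps)
    show "g i = h i / real_of_int (n+1)"
      unfolding g_def h_def using assms by (simp add: bl cz)
  qed
  also have "(\<Sum>i\<le>nn. h i) = (\<Sum>i\<le>m. h i)"
  proof (rule sum.mono_neutral_right)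
    show "\<forall>i\<in>{..nn} - {..m}. h i = 0"
      unfolding h_def by (auto simp: cZ_neg)
  qed (use mn in auto)
  also have "\<dots> = real_of_int (FF (n+1) m)" unfolding h_def FF_def by simp
  also have "FF (n+1) m = RR (n+1) m" using assms by (intro FF_RR) simp
  also have "RR (n+1) m = (-1)^m * binomZ k (n-k)"
    unfolding RR_def binomZ_def using assms by (simp add: m_def)
  finally show ?thesis unfolding m_def by simp
qed

end
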